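(* Let $G_0,G_1\in\mathbb{Z}$, let $(G_n)_{n\ge0}$ satisfy $G_n=G_{n-1}+G_{n-2}$ for $n\ge2$, and let $\mu = G_1^2 - G_0 G_1 - G_0^2$. For all $k\ge 1$, $$\mathcal{G}^2_{G_0,G_1}(k) = \begin{cases} \gcd\left(G_{k+1}^2 - G_1^2,\; G_{k+2}^2 - G_2^2\right), & \text{if $k$ is even},\\ \gcd\left(2 \mu,\; G_{k+1}^2 - G_1^2,\; G_{k+2}^2 - G_2^2\right), & \text{if $k$ is odd}.\end{cases}$$
   Context: $\mathcal{G}^2_{G_0,G_1}(k)=\gcd\{\sum_{i=1}^k G_{n+i}^2 : n\ge 0\}$ (nonnegative gcd of this infinite set of integers). *)

theory Defs
  imports Main
begin

definition sqsum_gcd :: "(nat \<Rightarrow> int) \<Rightarrow> nat \<Rightarrow> int" where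
  "sqsum_gcd G k = Gcd {(\<Sum>i=1..k. (G (n + i))^2) | n. True}"

end

theory Submission
  imports Defs
begin

lemma tele:
  fixes G :: "nat \<Rightarrow> int" and n k :: nat
  assumes r: "\<And>n. G (n+2) = G (n+1) + (G n :: int)"
  shows "(\<Sum>i=1..k. (G (n + i))^2) = G (n+k) * G (n+k+1) - G n * G (n+1)"
proof (induction k)
  case 0 then show ?case by simp
next
  case (Suc k)
  have "G (n+k+2) = G (n+k+1) + G (n+k)" using r[of "n+k"] by (simp add: add.assoc eval_nat_numeral)
  then show ?case using Suc by (simp add: power2_eq_square algebra_simps eval_nat_numeral)
qed

lemma cass:
  fixes G :: "nat \<Rightarrow> int" and n :: nat
  assumes r: "\<And>n. G (n+2) = G (n+1) + (G n :: int)"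
  shows "(G (n+1))^2 - G n * G (n+1) - (G n)^2 = (-1)^n * ((G 1)^2 - G 0 * G 1 - (G 0)^2)"
proof (induction n)
  case 0 then show ?case by simp
next
  case (Suc n)
  have "G (n+2) = G (n+1) + G n" using r[of n] .
  then show ?case using Suc by (simp add: power2_eq_square algebra_simps eval_nat_numeral)
qed

lemma Prec:
  assumes r: "\<And>n. G (n+2) = G (n+1) + (G n :: int)"
  shows "G (m+3) * G (m+4) = 2 * (G (m+2) * G (m+3)) + 2 * (G (m+1) * G (m+2)) - G m * G (m+1)"
proof -
  have a: "G (m+2) = G (m+1) + G m" using r[of m] .
  have b: "G (m+3) = G (m+2) + G (m+1)" using r[of "m+1"] by (simp add: add.assoc eval_nat_numeral)
  have c: "G (m+4) = G (m+3) + G (m+2)" using r[of "m+2"] by (simp add: add.assoc eval_nat_numeral)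
  show ?thesis using a b c by (simp add: algebra_simps)
qed

theorem theorem3p11:
  fixes G :: "nat \<Rightarrow> int" and k :: nat
  assumes rec: "\<And>n. n \<ge> 2 \<Longrightarrow> G n = G (n - 1) + G (n - 2)"
    and k: "k \<ge> 1"
  defines "\<mu> \<equiv> (G 1)^2 - G 0 * G 1 - (G 0)^2"
  shows "sqsum_gcd G k =
    (if even k then gcd ((G (k+1))^2 - (G 1)^2) ((G (k+2))^2 - (G 2)^2)
     else gcd (2 * \<mu>) (gcd ((G (k+1))^2 - (G 1)^2) ((G (k+2))^2 - (G 2)^2)))"
proof -
  have r: "\<And>n. G (n+2) = G (n+1) + G n" using rec by (metis add_diff_cancel_right' le_add2 add.commute Suc_1 add_Suc_right diff_Suc_1 plus_1_eq_Suc)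
  define S where "S n = G (n+k) * G (n+k+1) - G n * G (n+1)" for n
  have Sdef: "(\<Sum>i=1..k. (G (n + i))^2) = S n" for n using tele[of G, OF r] S_def by simp
  define D0 where "D0 = (G (k+1))^2 - (G 1)^2"
  define D1 where "D1 = (G (k+2))^2 - (G 2)^2"
  define T where "T = (if even k then gcd D0 D1 else gcd (2 * \<mu>) (gcd D0 D1))"
  have g2: "G 2 = G 1 + G 0" using r[of 0] by (simp add: eval_nat_numeral)
  have gk2: "G (k+2) = G (k+1) + G k" using r[of k] by simp
  have gk3: "G (k+3) = G (k+2) + G (k+1)" using r[of "k+1"] by (simp add: add.assoc eval_nat_numeral)
  have g3: "G 3 = G 2 + G 1" using r[of 1] by (simp add: eval_nat_numeral)
  have S1: "S 1 = S 0 + D0" unfolding S_def D0_def using gk2 g2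
    by (simp add: power2_eq_square algebra_simps eval_nat_numeral)
  have S2: "S 2 = S 1 + D1" unfolding S_def D1_def using gk2 gk3 g2 g3
    by (simp add: power2_eq_square algebra_simps eval_nat_numeral)
  have ck: "(G (k+1))^2 - G k * G (k+1) - (G k)^2 = (-1)^k * \<mu>"
    using cass[of G, OF r, of k] unfolding \<mu>_def by simp
  have S0: "S 0 = D1 - 2 * D0 - (if even k then 0 else 2 * \<mu>)"
    using ck unfolding S_def D0_def D1_def \<mu>_def using gk2 g2
    by (cases "even k") (simp_all add: power2_eq_square algebra_simps eval_nat_numeral)
  have Srec: "S (m+3) = 2 * S (m+2) + 2 * S (m+1) - S m" for m
  proof -
    have "G (m+3) * G (m+4) = 2 * (G (m+2) * G (m+3)) + 2 * (G (m+1) * G (m+2)) - G m * G (m+1)"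
      using Prec[of G, OF r] .
    moreover have "G ((m+k)+3) * G ((m+k)+4) = 2 * (G ((m+k)+2) * G ((m+k)+3)) + 2 * (G ((m+k)+1) * G ((m+k)+2)) - G (m+k) * G (m+k+1)"
      using Prec[of G, OF r] .
    ultimately show ?thesis unfolding S_def by (simp add: algebra_simps numeral_eq_Suc)
  qed
  have TD0: "T dvd D0" and TD1: "T dvd D1" unfolding T_def by (auto intro: dvd_trans[OF gcd_dvd2])
  have TS0: "T dvd S 0"
  proof (cases "even k")
    case True then show ?thesis using S0 TD0 TD1 by simp
  next
    case False
    have "T dvd 2 * \<mu>" unfolding T_def using False by simp
    then show ?thesis using S0 TD0 TD1 False by simp
  qed
  have TS1: "T dvd S 1" using S1 TS0 TD0 by simp
  have TS2: "T dvd S 2" using S2 TS1 TD1 by simp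
  have all: "T dvd S m \<and> T dvd S (m+1) \<and> T dvd S (m+2)" for m
  proof (induction m)
    case 0 then show ?case using TS0 TS1 TS2 by (simp add: eval_nat_numeral)
  next
    case (Suc m)
    then have "T dvd S (m+3)" using Srec[of m] by simp
    then show ?case using Suc by (simp add: numeral_eq_Suc)
  qed
  have "sqsum_gcd G k = T"
    unfolding sqsum_gcd_def
  proof (rule Gcd_eqI)
    show "normalize T = T" unfolding T_def by simp
  next
    fix b assume "b \<in> {(\<Sum>i=1..k. (G (n + i))^2) | n. True}"
    then obtain n where "b = S n" using Sdef by auto
    then show "T dvd b" using all[of n] by simp
  next
    fix c assume h: "\<And>b. b \<in> {(\<Sum>i=1..k. (G (n + i))^2) | n. True} \<Longrightarrow> c dvd b"
    have cS: "c dvd S n" for n using h[of "S n"] Sdef by auto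
    have c0: "c dvd D0" using cS[of 0] cS[of 1] S1 by (metis add_diff_cancel_left' dvd_diff)
    have c1: "c dvd D1" using cS[of 1] cS[of 2] S2 by (metis add_diff_cancel_left' dvd_diff)
    show "c dvd T"
    proof (cases "even k")
      case True then show ?thesis unfolding T_def using c0 c1 by simp
    next
      case False
      have "2 * \<mu> = D1 - 2 * D0 - S 0" using S0 False by simp
      then have "c dvd 2 * \<mu>" using c0 c1 cS[of 0] by simp
      then show ?thesis unfolding T_def using c0 c1 False by simp
    qed
  qed
  then show ?thesis unfolding T_def D0_def D1_def by simp
qed

end
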